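(* Let $A\in\mathbb{R}^{n\times n}$, $B\in\mathbb{R}^{n\times m}$, $C\in\mathbb{R}^{q\times n}$, and let $\tilde C\in\mathbb{R}^{q_m\times n}$ consist of a subset of the rows of $C$. Suppose the sequences $g_k\in\mathbb{R}^{q\times m}$, $\tilde g_k\in\mathbb{R}^{q_m\times m}$ satisfy $g_k=CA^{k-1}B$ and $\tilde g_k=\tilde CA^{k-1}B$ for all $k\ge 1$. If $(A,\tilde C)$ is an observable pair, then there exists a positive integer $p$ such that for all positive integers $r,p_f$, $$\mathrm{Null}\big(T_1^{p,r}(\{\tilde g_k\})\big)\subseteq \mathrm{Null}\big(T_{p+1}^{p_f,r}(\{g_k\})\big).$$
   Context: $(A,\tilde C)$ is an observable pair if the matrix obtained by stacking $\tilde C,\tilde CA,\dots,\tilde CA^{n-1}$ vertically has full column rank. For a sequence of matrices $\{h_k\}$ and positive integers $j,a,b$, $T_j^{a,b}(\{h_k\})$ denotes the $a\times b$ block matrix whose $(\mu,\nu)$ block ($1\le\mu\le a$, $1\le\nu\le b$) is $h_{j+a-\mu+\nu-1}$; so its first block row is $(h_{j+a-1},\dots,h_{j+a+b-2})$ and its last block row is $(h_j,\dots,h_{j+b-1})$. *)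

theory Defs
  imports "Jordan_Normal_Form.Matrix_Kernel" "Jordan_Normal_Form.DL_Rank"
begin

definition obs_matrix :: "real mat \<Rightarrow> real mat \<Rightarrow> real mat" where
  "obs_matrix A Ct = (let n = dim_col A; qm = dim_row Ct in
     mat (n * qm) n (\<lambda>(i, j). (Ct * A ^\<^sub>m (i div qm)) $$ (i mod qm, j)))"

definition observable_pair :: "real mat \<Rightarrow> real mat \<Rightarrow> bool" where
  "observable_pair A Ct \<longleftrightarrow>
     vec_space.rank (dim_col A * dim_row Ct) (obs_matrix A Ct) = dim_col A"

text \<open>Block Toeplitz matrix T_j^{a,b}({h_k}) with blocks of size qq x mm.
  0-based block indices (mu', nu') correspond to (mu'+1, nu'+1), so the
  block is h (j + a - 1 - mu' + nu').\<close>
definition block_toeplitz ::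
  "nat \<Rightarrow> nat \<Rightarrow> (nat \<Rightarrow> real mat) \<Rightarrow> nat \<Rightarrow> nat \<Rightarrow> nat \<Rightarrow> real mat" where
  "block_toeplitz qq mm h j a b =
     mat (a * qq) (b * mm)
       (\<lambda>(i, l). h (j + a - 1 - i div qq + l div mm) $$ (i mod qq, l mod mm))"

end

theory Submission
  imports Defs
begin

lemma (in vec_space) non_distinct_low_rank_gen:
assumes "A \<in> carrier_mat n nc"
and "\<not> distinct (cols A)"
shows "rank A < nc"
proof -
  obtain S where "maximal S (\<lambda>T. T \<subseteq> set (cols A) \<and> lin_indpt T)"
    using maximal_exists[of "(\<lambda>T. T \<subseteq> set (cols A) \<and> lin_indpt T)" "card (set (cols A))" "{}"]
    by (meson List.finite_set card_mono empty_iff empty_subsetI finite_lin_indpt2 rev_finite_subset)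
  then have "card S \<le> card (set (cols A))" by (simp add: card_mono maximal_def)
  then have "card S < nc"
    using assms(1) cols_length card_length \<open>\<not> distinct (cols A)\<close> card_distinct carrier_matD(2) nat_less_le
    by (metis dual_order.antisym dual_order.trans)
  then show ?thesis
    using rank_card_indpt[OF \<open>A \<in> carrier_mat n nc\<close> \<open>maximal S (\<lambda>T. T \<subseteq> set (cols A) \<and> lin_indpt T)\<close>]
    by simp
qed

lemma full_rank_kernel:
  fixes M :: "real mat"
  assumes M: "M \<in> carrier_mat nr nc" and rk: "vec_space.rank nr M = nc"
    and w: "w \<in> carrier_vec nc" and z: "M *\<^sub>v w = 0\<^sub>v nr"
  shows "w = 0\<^sub>v nc"
proof (rule ccontr)
  assume ne: "w \<noteq> 0\<^sub>v nc"
  have d: "distinct (cols M)"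
    using vec_space.non_distinct_low_rank_gen[OF M] rk by fastforce
  show False
    using vec_space.full_rank_lin_indpt[OF M rk d] vec_space.lin_depI[OF M w ne z d] by simp
qed

lemma pow_mat_add:
  fixes A :: "real mat"
  assumes A: "A \<in> carrier_mat n n"
  shows "A ^\<^sub>m (a + b) = A ^\<^sub>m a * A ^\<^sub>m b"
proof (induction b)
  case 0
  then show ?case using A by simp
next
  case (Suc b)
  have "A ^\<^sub>m (a + Suc b) = A ^\<^sub>m (a + b) * A" by simp
  also have "\<dots> = A ^\<^sub>m a * A ^\<^sub>m b * A" using Suc by simp
  also have "\<dots> = A ^\<^sub>m a * (A ^\<^sub>m b * A)"
    using A by (intro assoc_mult_mat) auto
  finally show ?case by simp
qed

lemma sum_blocks:
  "(\<Sum>c<r*m. f c) = (\<Sum>a<r. \<Sum>b<m. f (a*m+b::nat))"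
proof (induction r)
  case 0
  then show ?case by simp
next
  case (Suc r)
  have "(\<Sum>c<Suc r*m. f c) = (\<Sum>c<r*m + m. f c)" by (simp add: add.commute)
  also have "\<dots> = (\<Sum>c<r*m. f c) + (\<Sum>b<m. f (r*m+b))"
  proof -
    have "(\<Sum>c<x + k. f c) = (\<Sum>c<x. f c) + (\<Sum>b<k. f (x+b))" for x k
      by (induction k) (simp_all add: add.assoc)
    then show ?thesis .
  qed
  finally show ?case using Suc by simp
qed

definition Wv :: "real mat \<Rightarrow> real mat \<Rightarrow> nat \<Rightarrow> nat \<Rightarrow> real vec \<Rightarrow> real vec" where
  "Wv A B r m v = vec (dim_row A) (\<lambda>k. \<Sum>nu<r. \<Sum>l<m. (A ^\<^sub>m nu * B) $$ (k, l) * v $ (nu*m+l))"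

lemma toep_mult:
  fixes M A B :: "real mat" and h :: "nat \<Rightarrow> real mat"
  assumes A: "A \<in> carrier_mat n n" and B: "B \<in> carrier_mat n m"
    and M: "M \<in> carrier_mat q0 n"
    and h: "\<forall>k\<ge>1. h k = M * A ^\<^sub>m (k - 1) * B"
    and j: "j \<ge> 1" and v: "v \<in> carrier_vec (r*m)" and i: "i < a*q0"
  shows "(block_toeplitz q0 m h j a r *\<^sub>v v) $ i
     = ((M * A ^\<^sub>m (j + a - 1 - i div q0 - 1)) *\<^sub>v Wv A B r m v) $ (i mod q0)"
proof -
  define mu where "mu = i div q0"
  define a0 where "a0 = i mod q0"
  define e where "e = j + a - 1 - i div q0 - 1"
  have q0: "q0 > 0" using i by (cases q0) auto
  have mu: "mu < a" using i q0 unfolding mu_def by (simp add: less_mult_imp_div_less)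
  have a0: "a0 < q0" using q0 unfolding a0_def by simp
  define t where "t = j + a - 1 - mu"
  define X where "X = M * A ^\<^sub>m e"
  have X: "X \<in> carrier_mat q0 n" unfolding X_def using M A by simp
  have ent: "h (t + nu) $$ (a0, l) = (\<Sum>k<n. X $$ (a0, k) * (A ^\<^sub>m nu * B) $$ (k, l))"
    if l: "l < m" for nu l
  proof -
    have "h (t + nu) = M * A ^\<^sub>m (e + nu) * B"
      using h j mu unfolding e_def mu_def t_def by (auto simp: algebra_simps)
    also have "\<dots> = M * (A ^\<^sub>m e * A ^\<^sub>m nu) * B" using pow_mat_add[OF A] by simp
    also have "\<dots> = M * A ^\<^sub>m e * A ^\<^sub>m nu * B"
      using M A B by (simp add: assoc_mult_mat[of M q0 n _ n _ n])
    also have "\<dots> = X * (A ^\<^sub>m nu * B)" unfolding X_def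
      using M A B by (simp add: assoc_mult_mat[of _ q0 n _ n B m])
    finally show ?thesis using X A B a0 l
      by (simp add: scalar_prod_def atLeast0LessThan)
  qed
  have "(block_toeplitz q0 m h j a r *\<^sub>v v) $ i
      = (\<Sum>c<r*m. h (t + c div m) $$ (a0, c mod m) * v $ c)"
    using i v unfolding block_toeplitz_def mu_def a0_def t_def
    by (simp add: scalar_prod_def atLeast0LessThan)
  also have "\<dots> = (\<Sum>nu<r. \<Sum>l<m. h (t + nu) $$ (a0, l) * v $ (nu*m+l))"
    unfolding sum_blocks by (intro sum.cong refl) auto
  also have "\<dots> = (\<Sum>nu<r. \<Sum>l<m. \<Sum>k<n. X $$ (a0, k) * ((A ^\<^sub>m nu * B) $$ (k, l) * v $ (nu*m+l)))"
    by (intro sum.cong refl) (simp add: ent sum_distrib_right mult.assoc)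
  also have "\<dots> = (\<Sum>k<n. X $$ (a0, k) * (\<Sum>nu<r. \<Sum>l<m. (A ^\<^sub>m nu * B) $$ (k, l) * v $ (nu*m+l)))"
    by (simp add: sum_distrib_left sum.swap[of _ "{..<n}"])
  also have "\<dots> = (X *\<^sub>v Wv A B r m v) $ a0"
    using X A a0 unfolding Wv_def by (simp add: scalar_prod_def atLeast0LessThan)
  finally show ?thesis unfolding X_def e_def a0_def by simp
qed
theorem theorem3:
  fixes A B C Ct :: "real mat" and g gt :: "nat \<Rightarrow> real mat"
    and n m q qm :: nat and idx :: "nat \<Rightarrow> nat"
  assumes A: "A \<in> carrier_mat n n"
    and B: "B \<in> carrier_mat n m"
    and C: "C \<in> carrier_mat q n"
    and Ct: "Ct \<in> carrier_mat qm n"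
    and idx_inj: "inj_on idx {..<qm}"
    and idx_range: "\<forall>i<qm. idx i < q"
    and Ct_rows: "\<forall>i<qm. row Ct i = row C (idx i)"
    and g: "\<forall>k\<ge>1. g k = C * A ^\<^sub>m (k - 1) * B"
    and gt: "\<forall>k\<ge>1. gt k = Ct * A ^\<^sub>m (k - 1) * B"
    and obs: "observable_pair A Ct"
  shows "\<exists>p::nat. p > 0 \<and> (\<forall>r pf::nat. r > 0 \<longrightarrow> pf > 0 \<longrightarrow>
           mat_kernel (block_toeplitz qm m gt 1 p r)
             \<subseteq> mat_kernel (block_toeplitz q m g (p + 1) pf r))"
proof (intro exI[of _ "n+1"] conjI allI impI)
  show "n + 1 > 0" by simp
  fix r pf :: nat assume r: "r > 0" and pf: "pf > 0"
  let ?p = "n + 1"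
  show "mat_kernel (block_toeplitz qm m gt 1 ?p r) \<subseteq> mat_kernel (block_toeplitz q m g (?p + 1) pf r)"
  proof
    fix v assume vk: "v \<in> mat_kernel (block_toeplitz qm m gt 1 ?p r)"
    have T1: "block_toeplitz qm m gt 1 ?p r \<in> carrier_mat (?p*qm) (r*m)"
      unfolding block_toeplitz_def by simp
    have T2: "block_toeplitz q m g (?p+1) pf r \<in> carrier_mat (pf*q) (r*m)"
      unfolding block_toeplitz_def by simp
    have v: "v \<in> carrier_vec (r*m)" and Tv: "block_toeplitz qm m gt 1 ?p r *\<^sub>v v = 0\<^sub>v (?p*qm)"
      using mat_kernelD[OF T1 vk] by auto
    define w where "w = Wv A B r m v"
    have w: "w \<in> carrier_vec n" unfolding w_def Wv_def using A by simp
    have zero: "(Ct * A ^\<^sub>m s *\<^sub>v w) $ a0 = 0" if s: "s < n" and a0: "a0 < qm" for s a0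
    proof -
      define i where "i = (n - s) * qm + a0"
      have i: "i < ?p * qm"
      proof -
        have "i < (n - s) * qm + qm" unfolding i_def using a0 by simp
        also have "\<dots> \<le> ?p * qm" using s by (simp add: add_mult_distrib)
        finally show ?thesis .
      qed
      have idiv: "i div qm = n - s" and imod: "i mod qm = a0" unfolding i_def using a0 by auto
      have "(block_toeplitz qm m gt 1 ?p r *\<^sub>v v) $ i
         = ((Ct * A ^\<^sub>m (1 + ?p - 1 - i div qm - 1)) *\<^sub>v w) $ (i mod qm)"
        unfolding w_def by (rule toep_mult[OF A B Ct gt _ v i]) simp
      also have "1 + ?p - 1 - i div qm - 1 = s" unfolding idiv using s by simp
      finally show ?thesis using Tv i imod by simp
    qed
    have O: "obs_matrix A Ct \<in> carrier_mat (n*qm) n"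
      unfolding obs_matrix_def using A Ct by (simp add: Let_def)
    have Ow: "obs_matrix A Ct *\<^sub>v w = 0\<^sub>v (n*qm)"
    proof (rule eq_vecI)
      fix i assume "i < dim_vec (0\<^sub>v (n*qm) :: real vec)"
      then have i: "i < n*qm" by simp
      then have qm: "qm > 0" by (cases qm) auto
      have id: "i div qm < n" using i by (simp add: less_mult_imp_div_less)
      have im: "i mod qm < qm" using qm by simp
      have "(obs_matrix A Ct *\<^sub>v w) $ i = (Ct * A ^\<^sub>m (i div qm) *\<^sub>v w) $ (i mod qm)"
        using i O w A Ct im unfolding obs_matrix_def
        by (simp add: Let_def scalar_prod_def atLeast0LessThan)
      also have "\<dots> = 0" using zero[OF id im] .
      finally show "(obs_matrix A Ct *\<^sub>v w) $ i = (0\<^sub>v (n*qm) :: real vec) $ i" using i by simp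
    qed (use O in simp)
    have rk: "vec_space.rank (n*qm) (obs_matrix A Ct) = n"
      using obs A Ct unfolding observable_pair_def by simp
    have w0: "w = 0\<^sub>v n" by (rule full_rank_kernel[OF O rk w Ow])
    show "v \<in> mat_kernel (block_toeplitz q m g (?p + 1) pf r)"
    proof (rule mat_kernelI[OF T2 v], rule eq_vecI)
      fix i assume "i < dim_vec (0\<^sub>v (pf*q) :: real vec)"
      then have i: "i < pf*q" by simp
      then have q: "q > 0" by (cases q) auto
      have "(block_toeplitz q m g (?p+1) pf r *\<^sub>v v) $ i
         = ((C * A ^\<^sub>m (?p + 1 + pf - 1 - i div q - 1)) *\<^sub>v w) $ (i mod q)"
        unfolding w_def by (rule toep_mult[OF A B C g _ v i]) simp
      also have "\<dots> = 0" using w0 C A q by (simp add: scalar_prod_def)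
      finally show "(block_toeplitz q m g (?p+1) pf r *\<^sub>v v) $ i = (0\<^sub>v (pf*q) :: real vec) $ i"
        using i by simp
    qed (use T2 in simp)
  qed
qed

end
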